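(* Assume the standing setup with (C1)–(C3), $1\le i\le n-1$, $\xi\in V_{\mathbb C}(\mathcal I_i)$, $\eta_i$, $\xi_{i+1,j}$ and $\theta_j$ ($j=1,\dots,m$) as in the context. Let $I_i=\langle[a,b],[c,d]\rangle$ be a complex interval containing $\eta_i$, and for $j=1,\dots,m$ let $K_j=\langle[p_j,q_j],[g_j,h_j]\rangle$ be pairwise disjoint complex intervals with $\theta_j\in K_j$. Define $J_{i+1,j}=\frac{K_j-I_i}{s_1\cdots s_i}=\frac{\langle[p_j-b,\,q_j-a],\,[g_j-d,\,h_j-c]\rangle}{s_1\cdots s_i}$. Suppose that for all $j$ $(q_j-p_j)+(b-a)<s_1\cdots s_i\,\epsilon$ and $(h_j-g_j)+(d-c)<s_1\cdots s_i\,\epsilon$, and that $S_{\eta_i}:=\min_{1\le k\ne j\le m}\mathrm{Dis}(K_k,K_j)>\max\{b-a,d-c\}$. Then $\xi_{i+1,j}\in J_{i+1,j}$ for every $j$, each $J_{i+1,j}$ has length less than $\epsilon$, and the $J_{i+1,j}$, $j=1,\dots,m$, are pairwise disjoint.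
   Context: Standing setup. $\mathcal P\subset\mathbb Q[x_1,\dots,x_n]$ zero-dimensional; $\mathcal I_i=(\mathcal P)\cap\mathbb Q[x_1,\dots,x_i]$ with complex zero set $V_{\mathbb C}(\mathcal I_i)$. For $c=u+v\mathrm{i}$, $|c|=\max\{|u|,|v|\}$. Positive rationals $d_i,r_i,s_i$ satisfy (C1) $d_i<\min\{D_i,d_{i-1}/(2s_{i-1})\}$ where $D_i=\min\{\tfrac12|\alpha-\beta| : \eta\in V_{\mathbb C}(\mathcal I_{i-1}),(\eta,\alpha),(\eta,\beta)\in V_{\mathbb C}(\mathcal I_i),\alpha\ne\beta\}$ ($+\infty$ if empty), $s_0=1,d_0=+\infty$; (C2) $r_i>2\max\{|\alpha_i| : (\alpha_1,\dots,\alpha_i)\in V_{\mathbb C}(\mathcal I_i)\}$; (C3) $s_i\le d_i/r_{i+1}$. For $\xi=(\xi_1,\dots,\xi_i)\in V_{\mathbb C}(\mathcal I_i)$: $\eta_i=\xi_1+s_1\xi_2+\cdots+s_1\cdots s_{i-1}\xi_i$; $(\xi,\xi_{i+1,j})$, $j=1,\dots,m$, are all points of $V_{\mathbb C}(\mathcal I_{i+1})$ over $\xi$; $\theta_j=\eta_i+s_1\cdots s_i\xi_{i+1,j}$. A complex interval $\langle[a,b],[c,d]\rangle$ ($a\le b$, $c\le d$ rational) is the closed rectangle $\{u+v\mathrm i: u\in[a,b],v\in[c,d]\}$, of length $\max\{b-a,d-c\}$; dividing by a positive number divides all endpoints. For real intervals with $a_1\le a_2$: $\mathrm{Dis}([a_1,b_1],[a_2,b_2])=a_2-b_1$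 if disjoint, else $0$; for complex intervals $\mathrm{Dis}(\langle I_1,J_1\rangle,\langle I_2,J_2\rangle)=\max\{\mathrm{Dis}(I_1,I_2),\mathrm{Dis}(J_1,J_2)\}$. *)

theory Defs
  imports Complex_Main "HOL-Library.Poly_Mapping" "HOL-Library.Extended_Real"
begin

section \<open>Multivariate rational polynomials (variable x_(k+1) is index k)\<close>

type_synonym mpoly = "(nat \<Rightarrow>\<^sub>0 nat) \<Rightarrow>\<^sub>0 rat"

definition mpoly_eval :: "mpoly \<Rightarrow> complex list \<Rightarrow> complex" where
  "mpoly_eval p xs = (\<Sum>mon\<in>Poly_Mapping.keys p. of_rat (Poly_Mapping.lookup p mon) * (\<Prod>v\<in>Poly_Mapping.keys mon. (xs ! v) ^ (Poly_Mapping.lookup mon v)))"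

definition in_vars :: "nat \<Rightarrow> mpoly \<Rightarrow> bool" where
  "in_vars i p \<longleftrightarrow> (\<forall>m\<in>Poly_Mapping.keys p. \<forall>v\<in>Poly_Mapping.keys m. v < i)"

definition ideal_gen :: "mpoly set \<Rightarrow> mpoly set" where
  "ideal_gen P = {q. \<exists>S c. finite S \<and> S \<subseteq> P \<and> q = (\<Sum>p\<in>S. c p * p)}"

definition elim_ideal :: "mpoly set \<Rightarrow> nat \<Rightarrow> mpoly set" where
  "elim_ideal P i = ideal_gen P \<inter> {p. in_vars i p}"

definition zeroset :: "nat \<Rightarrow> mpoly set \<Rightarrow> complex list set" where
  "zeroset i F = {xs. length xs = i \<and> (\<forall>p\<in>F. mpoly_eval p xs = 0)}"

abbreviation VC :: "mpoly set \<Rightarrow> nat \<Rightarrow> complex list set" where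
  "VC P i \<equiv> zeroset i (elim_ideal P i)"

definition cnorm :: "complex \<Rightarrow> real" where
  "cnorm z = max \<bar>Re z\<bar> \<bar>Im z\<bar>"

definition Dset :: "mpoly set \<Rightarrow> nat \<Rightarrow> real set" where
  "Dset P i = {cnorm (\<alpha> - \<beta>) / 2 | \<eta> \<alpha> \<beta>. \<eta> \<in> VC P (i - 1) \<and>
      \<eta> @ [\<alpha>] \<in> VC P i \<and> \<eta> @ [\<beta>] \<in> VC P i \<and> \<alpha> \<noteq> \<beta>}"

text \<open>D_i (= +infinity if the set is empty)\<close>
definition Dval :: "mpoly set \<Rightarrow> nat \<Rightarrow> ereal" where
  "Dval P i = Inf (ereal ` Dset P i)"

text \<open>(C1), with s_0 = 1 and d_0 = +infinity, for i = 1..n\<close>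
definition C1 :: "mpoly set \<Rightarrow> nat \<Rightarrow> (nat \<Rightarrow> rat) \<Rightarrow> (nat \<Rightarrow> rat) \<Rightarrow> bool" where
  "C1 P n d s \<longleftrightarrow> (\<forall>i\<in>{1..n}. ereal (of_rat (d i)) < Dval P i \<and>
      (i \<ge> 2 \<longrightarrow> d i < d (i - 1) / (2 * s (i - 1))))"

definition C2 :: "mpoly set \<Rightarrow> nat \<Rightarrow> (nat \<Rightarrow> rat) \<Rightarrow> bool" where
  "C2 P n r \<longleftrightarrow> (\<forall>i\<in>{1..n}. \<forall>xs\<in>VC P i. 2 * cnorm (xs ! (i - 1)) < of_rat (r i))"

definition C3 :: "nat \<Rightarrow> (nat \<Rightarrow> rat) \<Rightarrow> (nat \<Rightarrow> rat) \<Rightarrow> (nat \<Rightarrow> rat) \<Rightarrow> bool" where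
  "C3 n d r s \<longleftrightarrow> (\<forall>i\<in>{1..n-1}. s i \<le> d i / r (i + 1))"

definition sprod :: "(nat \<Rightarrow> rat) \<Rightarrow> nat \<Rightarrow> rat" where
  "sprod s k = (\<Prod>l\<in>{1..k}. s l)"

definition eta :: "(nat \<Rightarrow> rat) \<Rightarrow> complex list \<Rightarrow> nat \<Rightarrow> complex" where
  "eta s xi i = (\<Sum>k\<in>{1..i}. of_rat (sprod s (k - 1)) * xi ! (k - 1))"

type_synonym cinterval = "(rat \<times> rat) \<times> (rat \<times> rat)"

definition cset :: "cinterval \<Rightarrow> complex set" where
  "cset I = (case I of ((a, b), (c, d)) \<Rightarrow>
     {z. of_rat a \<le> Re z \<and> Re z \<le> of_rat b \<and> of_rat c \<le> Im z \<and> Im z \<le> of_rat d})"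

definition clen :: "cinterval \<Rightarrow> rat" where
  "clen I = (case I of ((a, b), (c, d)) \<Rightarrow> max (b - a) (d - c))"

definition cdivide :: "cinterval \<Rightarrow> rat \<Rightarrow> cinterval" where
  "cdivide I t = (case I of ((a, b), (c, d)) \<Rightarrow> ((a / t, b / t), (c / t, d / t)))"

definition rDis :: "rat \<times> rat \<Rightarrow> rat \<times> rat \<Rightarrow> rat" where
  "rDis I1 I2 = (case I1 of (a1, b1) \<Rightarrow> case I2 of (a2, b2) \<Rightarrow>
     (if a1 \<le> a2 then (if b1 < a2 then a2 - b1 else 0)
      else (if b2 < a1 then a1 - b2 else 0)))"

definition cDis :: "cinterval \<Rightarrow> cinterval \<Rightarrow> rat" where
  "cDis K1 K2 = max (rDis (fst K1) (fst K2)) (rDis (snd K1) (snd K2))"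

end

theory Submission
  imports Defs
begin

lemma cr: "complex_of_rat x = complex_of_real (of_rat x)"
  by (cases x) (simp add: of_rat_rat)

theorem mainTheorem10:
  fixes P :: "mpoly set" and n i m :: nat
    and d r s :: "nat \<Rightarrow> rat"
    and xi :: "complex list" and xnext :: "nat \<Rightarrow> complex"
    and a b c e :: rat and p q g h :: "nat \<Rightarrow> rat" and \<epsilon> :: real
  assumes P_vars: "\<forall>f\<in>P. in_vars n f"
    and zero_dim: "finite (VC P n)"
    and pos: "\<forall>k\<in>{1..n}. d k > 0 \<and> r k > 0 \<and> s k > 0"
    and C1: "C1 P n d s" and C2: "C2 P n r" and C3: "C3 n d r s"
    and i_range: "1 \<le> i" "i \<le> n - 1"
    and xi_in: "xi \<in> VC P i"
    and fibre: "bij_betw xnext {1..m} {\<alpha>. xi @ [\<alpha>] \<in> VC P (i + 1)}"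
    and I_ord: "a \<le> b" "c \<le> e"
    and eta_in: "eta s xi i \<in> cset ((a, b), (c, e))"
    and K_ord: "\<forall>j\<in>{1..m}. p j \<le> q j \<and> g j \<le> h j"
    and K_disj: "\<forall>j\<in>{1..m}. \<forall>k\<in>{1..m}. j \<noteq> k \<longrightarrow>
                   cset ((p j, q j), (g j, h j)) \<inter> cset ((p k, q k), (g k, h k)) = {}"
    and theta_in: "\<forall>j\<in>{1..m}. eta s xi i + of_rat (sprod s i) * xnext j \<in> cset ((p j, q j), (g j, h j))"
    and len1: "\<forall>j\<in>{1..m}. of_rat ((q j - p j) + (b - a)) < of_rat (sprod s i) * \<epsilon>"
    and len2: "\<forall>j\<in>{1..m}. of_rat ((h j - g j) + (e - c)) < of_rat (sprod s i) * \<epsilon>"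
    and sep: "\<forall>k\<in>{1..m}. \<forall>j\<in>{1..m}. k \<noteq> j \<longrightarrow>
                cDis ((p k, q k), (g k, h k)) ((p j, q j), (g j, h j)) > max (b - a) (e - c)"
  shows "(\<forall>j\<in>{1..m}. xnext j \<in> cset (cdivide ((p j - b, q j - a), (g j - e, h j - c)) (sprod s i)))
       \<and> (\<forall>j\<in>{1..m}. of_rat (clen (cdivide ((p j - b, q j - a), (g j - e, h j - c)) (sprod s i))) < \<epsilon>)
       \<and> (\<forall>j\<in>{1..m}. \<forall>k\<in>{1..m}. j \<noteq> k \<longrightarrow>
            cset (cdivide ((p j - b, q j - a), (g j - e, h j - c)) (sprod s i)) \<inter>
            cset (cdivide ((p k - b, q k - a), (g k - e, h k - c)) (sprod s i)) = {})"
proof -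
  define S where "S = sprod s i"
  have Spos: "S > 0" unfolding S_def sprod_def
    using pos i_range by (intro prod_pos) auto
  have Sr: "(of_rat S :: real) > 0" using Spos by simp
  have E: "\<And>x y::rat. (of_rat (x / S) \<le> (of_rat (y/S)::real)) = (x \<le> y)"
    using Spos by (simp add: of_rat_less_eq divide_right_mono divide_le_cancel)
  have P1: "xnext j \<in> cset (cdivide ((p j - b, q j - a), (g j - e, h j - c)) S)" if j: "j \<in> {1..m}" for j
  proof -
    have t: "of_rat (p j) \<le> Re (eta s xi i) + of_rat S * Re (xnext j)"
            "Re (eta s xi i) + of_rat S * Re (xnext j) \<le> of_rat (q j)"
            "of_rat (g j) \<le> Im (eta s xi i) + of_rat S * Im (xnext j)"
            "Im (eta s xi i) + of_rat S * Im (xnext j) \<le> of_rat (h j)"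
      using theta_in j unfolding cset_def S_def by (auto simp: cr)
    have u: "of_rat a \<le> Re (eta s xi i)" "Re (eta s xi i) \<le> of_rat b"
            "of_rat c \<le> Im (eta s xi i)" "Im (eta s xi i) \<le> of_rat e"
      using eta_in unfolding cset_def by auto
    have "of_rat (p j - b) \<le> of_rat S * Re (xnext j)" "of_rat S * Re (xnext j) \<le> of_rat (q j - a)"
         "of_rat (g j - e) \<le> of_rat S * Im (xnext j)" "of_rat S * Im (xnext j) \<le> of_rat (h j - c)"
      using t u by (auto simp: of_rat_diff)
    then show ?thesis using Sr unfolding cdivide_def cset_def
      by (auto simp: of_rat_divide pos_divide_le_eq pos_le_divide_eq mult.commute)
  qed
  have P2: "of_rat (clen (cdivide ((p j - b, q j - a), (g j - e, h j - c)) S)) < \<epsilon>" if j: "j \<in> {1..m}" for j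
  proof -
    have "clen (cdivide ((p j - b, q j - a), (g j - e, h j - c)) S)
        = max (((q j - p j) + (b - a)) / S) (((h j - g j) + (e - c)) / S)"
      unfolding clen_def cdivide_def by (simp add: diff_divide_distrib[symmetric] algebra_simps)
    moreover have "of_rat (((q j - p j) + (b - a)) / S) < \<epsilon>"
      using len1 j Sr unfolding S_def[symmetric] by (simp add: of_rat_divide pos_divide_less_eq mult.commute)
    moreover have "of_rat (((h j - g j) + (e - c)) / S) < \<epsilon>"
      using len2 j Sr unfolding S_def[symmetric] by (simp add: of_rat_divide pos_divide_less_eq mult.commute)
    ultimately show ?thesis by (simp add: max_def)
  qed
  have P3: "cset (cdivide ((p j - b, q j - a), (g j - e, h j - c)) S) \<inter>
            cset (cdivide ((p k - b, q k - a), (g k - e, h k - c)) S) = {}"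
    if j: "j \<in> {1..m}" and k: "k \<in> {1..m}" and jk: "j \<noteq> k" for j k
  proof (rule ccontr)
    assume "\<not> ?thesis"
    then obtain z where z: "z \<in> cset (cdivide ((p j - b, q j - a), (g j - e, h j - c)) S)"
        "z \<in> cset (cdivide ((p k - b, q k - a), (g k - e, h k - c)) S)" by blast
    have "of_rat ((p k - b)/S) \<le> (of_rat ((q j - a)/S)::real)"
         "of_rat ((p j - b)/S) \<le> (of_rat ((q k - a)/S)::real)"
         "of_rat ((g k - e)/S) \<le> (of_rat ((h j - c)/S)::real)"
         "of_rat ((g j - e)/S) \<le> (of_rat ((h k - c)/S)::real)"
      using z unfolding cdivide_def cset_def by auto
    then have f: "p k - b \<le> q j - a" "p j - b \<le> q k - a" "g k - e \<le> h j - c" "g j - e \<le> h k - c"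
      unfolding E by auto
    have "rDis (p j, q j) (p k, q k) \<le> b - a" "rDis (g j, h j) (g k, h k) \<le> e - c"
      using f I_ord unfolding rDis_def by auto
    then have "cDis ((p j, q j), (g j, h j)) ((p k, q k), (g k, h k)) \<le> max (b - a) (e - c)"
      unfolding cDis_def by auto
    with sep j k jk show False by fastforce
  qed
  show ?thesis using P1 P2 P3 unfolding S_def by blast
qed

end
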